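(* Let $S$ be a finite semigroup. Every element of $S$ has a square root in $S$ if and only if every element of $S$ belongs to a maximal subgroup of $S$ of odd order.
   Context: A square root of $x\in S$ is an element $y\in S$ with $y^2=x$. A maximal subgroup of $S$ is a subgroup maximal under inclusion, equivalently the $\mathcal H$-class of an idempotent. *)

theory Defs
  imports Main
begin

definition is_subgroup :: "'a::semigroup_mult set \<Rightarrow> bool" where
  "is_subgroup G \<longleftrightarrow>
     (\<forall>x\<in>G. \<forall>y\<in>G. x * y \<in> G) \<and>
     (\<exists>e\<in>G. \<forall>x\<in>G. e * x = x \<and> x * e = x \<and> (\<exists>y\<in>G. x * y = e \<and> y * x = e))"

definition maximal_subgroup :: "'a::semigroup_mult set \<Rightarrow> bool" where
  "maximal_subgroup G \<longleftrightarrow> is_subgroup G \<and> (\<forall>H. is_subgroup H \<and> G \<subseteq> H \<longrightarrow> H = G)"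

end

theory Submission
  imports Defs "HOL-Algebra.Sylow" "HOL-Algebra.Multiplicative_Group"
begin

definition grp_of :: "'a::semigroup_mult set \<Rightarrow> 'a \<Rightarrow> 'a monoid" where
  "grp_of G e = \<lparr>carrier = G, monoid.mult = (\<lambda>a b. a * b), one = e\<rparr>"

lemma grp_of_group:
  fixes G :: "'a::semigroup_mult set"
  assumes cl: "\<forall>x\<in>G. \<forall>y\<in>G. x * y \<in> G" and eG: "e \<in> G"
    and ax: "\<forall>x\<in>G. e * x = x \<and> x * e = x \<and> (\<exists>y\<in>G. x * y = e \<and> y * x = e)"
  shows "group (grp_of G e)"
  apply (rule groupI)
  using cl eG ax by (auto simp: grp_of_def mult.assoc)

lemma sqrt_in_odd_group:
  fixes G :: "'a::semigroup_mult set"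
  assumes cl: "\<forall>x\<in>G. \<forall>y\<in>G. x * y \<in> G" and eG: "e \<in> G"
    and ax: "\<forall>x\<in>G. e * x = x \<and> x * e = x \<and> (\<exists>y\<in>G. x * y = e \<and> y * x = e)"
    and fin: "finite G" and odd: "odd (card G)" and x: "x \<in> G"
  shows "\<exists>y. y * y = x"
proof -
  interpret M: group "grp_of G e" by (rule grp_of_group[OF cl eG ax])
  have cg: "carrier (grp_of G e) = G" by (simp add: grp_of_def)
  have xc: "x \<in> carrier (grp_of G e)" using x cg by simp
  have o1: "x [^]\<^bsub>grp_of G e\<^esub> card G = \<one>\<^bsub>grp_of G e\<^esub>"
    using M.pow_order_eq_1[OF xc] cg by (simp add: order_def)
  obtain k where k: "card G = 2*k + 1" using odd oddE by blast
  define y where "y = x [^]\<^bsub>grp_of G e\<^esub> (k+1)"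
  have "y \<otimes>\<^bsub>grp_of G e\<^esub> y = x [^]\<^bsub>grp_of G e\<^esub> (card G + 1)"
  proof -
    have "card G + 1 = (k+1) + (k+1)" using k by simp
    then show ?thesis unfolding y_def using M.nat_pow_mult[OF xc, of "k+1" "k+1"] by simp
  qed
  also have "\<dots> = x" using o1 xc M.nat_pow_Suc[of x "card G"] by simp
  finally show ?thesis by (auto simp: grp_of_def)
qed

lemma involution_exists:
  fixes M (structure)
  assumes gr: "group M" and fin: "finite (carrier M)" and ev: "even (order M)"
  shows "\<exists>t\<in>carrier M. t \<noteq> \<one>\<^bsub>M\<^esub> \<and> t \<otimes>\<^bsub>M\<^esub> t = \<one>\<^bsub>M\<^esub>"
proof -
  interpret group M by (rule gr)
  have "order M = 2^1 * (order M div 2)" using ev by simp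
  then obtain H where sub: "subgroup H M" and c2: "card H = 2"
    using sylow_thm[of 2 M 1 "order M div 2"] gr fin by auto
  have oneH: "\<one> \<in> H" using sub subgroup.one_closed by blast
  obtain a b where ab: "H = {a, b}" "a \<noteq> b" using c2 card_2_iff by metis
  obtain t where tH: "H = {\<one>, t}" and tne: "t \<noteq> \<one>"
  proof (cases "a = \<one>")
    case True then show ?thesis using ab that by blast
  next
    case False
    then have "b = \<one>" using oneH ab by blast
    then have "H = {\<one>, a}" using ab by (simp add: insert_commute)
    then show ?thesis using False that by blast
  qed
  have Hc: "H \<subseteq> carrier M" using subgroup.subset[OF sub] .
  have tH': "t \<in> H" using tH by simp
  have tc: "t \<in> carrier M" using Hc tH' by (rule subsetD)
  have "t \<otimes> t \<in> H" using subgroup.m_closed[OF sub tH' tH'] .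
  moreover have "t \<otimes> t \<noteq> t"
    using l_cancel_one[OF tc tc] tne by simp
  ultimately have "t \<otimes> t = \<one>" using tH by simp
  then show ?thesis using tc tne by (intro bexI[of _ t]) simp_all
qed

fun pw :: "'a::semigroup_mult \<Rightarrow> nat \<Rightarrow> 'a" where
  "pw x 0 = x"
| "pw x (Suc n) = x * pw x n"

lemma pw_add: "pw x a * pw x b = pw x (a + b + 1)"
  by (induction a) (auto simp: mult.assoc)

lemma pw_comm: "pw x a * pw x b = pw x b * pw x a"
  by (simp add: pw_add add.commute)

lemma sq_iter: "((\<lambda>y. y * y) ^^ i) x = pw x (2^i - 1)"
proof (induction i)
  case 0 then show ?case by simp
next
  case (Suc i)
  have "pw x (2^i - 1) * pw x (2^i - 1) = pw x (2^i - 1 + (2^i - 1) + 1)" by (rule pw_add)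
  moreover have "2^i - 1 + (2^i - 1) + 1 = 2 ^ Suc i - (1::nat)"
  proof -
    have "(1::nat) \<le> 2^i" by simp
    moreover have "(2::nat)^Suc i = 2*2^i" by simp
    ultimately show ?thesis by linarith
  qed
  ultimately show ?case using Suc by (simp del: pw.simps)
qed

lemma pw_period:
  assumes "pw x (n+1) = x"
  shows "pw x (k + (n+1)) = pw x k"
proof (induction k)
  case 0 then show ?case using assms by simp
next
  case (Suc k) then show ?case by simp
qed

theorem corollary4p10:
  fixes dummy :: "'a::{finite, semigroup_mult}"
  shows "(\<forall>x::'a. \<exists>y. y * y = x) \<longleftrightarrow>
         (\<forall>x::'a. \<exists>G. maximal_subgroup G \<and> x \<in> G \<and> odd (card G))"
proof
  assume R: "\<forall>x::'a. \<exists>G. maximal_subgroup G \<and> x \<in> G \<and> odd (card G)"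
  show "\<forall>x::'a. \<exists>y. y * y = x"
  proof
    fix x :: 'a
    obtain G where G: "maximal_subgroup G" "x \<in> G" "odd (card G)" using R by blast
    then obtain e where "e \<in> G" "\<forall>x\<in>G. e * x = x \<and> x * e = x \<and> (\<exists>y\<in>G. x * y = e \<and> y * x = e)"
      "\<forall>x\<in>G. \<forall>y\<in>G. x * y \<in> G"
      unfolding maximal_subgroup_def is_subgroup_def by blast
    then show "\<exists>y. y * y = x" using sqrt_in_odd_group[of G e x] G by simp
  qed
next
  assume S: "\<forall>x::'a. \<exists>y. y * y = x"
  define sq where "sq = (\<lambda>y::'a. y * y)"
  have "surj sq" using S unfolding sq_def by (metis surjI)
  then have inj: "inj sq" using finite_surj_inj[of UNIV sq] by simp
  show "\<forall>x::'a. \<exists>G. maximal_subgroup G \<and> x \<in> G \<and> odd (card G)"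
  proof
    fix x :: 'a
    have "\<not> inj (\<lambda>i::nat. (sq ^^ i) x)"
    proof
      assume "inj (\<lambda>i::nat. (sq ^^ i) x)"
      then have "infinite (range (\<lambda>i::nat. (sq ^^ i) x))"
        using finite_imageD infinite_UNIV_nat by blast
      then show False by simp
    qed
    then obtain i j :: nat where ij: "(sq ^^ i) x = (sq ^^ j) x" "i < j"
      unfolding inj_def by (metis linorder_neqE_nat)
    define d where "d = j - i"
    have d1: "d \<ge> 1" using ij d_def by simp
    have "(sq ^^ i) ((sq ^^ d) x) = (sq ^^ i) x"
      using ij d_def by (metis add_diff_inverse_nat funpow_add less_imp_not_less o_apply)
    then have xd: "(sq ^^ d) x = x" using inj_fn[OF inj, of i] unfolding inj_def by blast
    have "(sq ^^ (d + d)) x = x" by (simp add: funpow_add xd)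
    then have xp: "pw x (2^(2*d) - 1) = x" using sq_iter[of "2*d" x] unfolding sq_def
      by (simp add: mult_2)
    have "(4::nat) \<le> 2^(2*d)"
      using power_increasing[of 2 "2*d" "2::nat"] d1 by simp
    define n :: nat where "n = 2^(2*d) - 2"
    have n1: "n \<ge> 1" using \<open>4 \<le> _\<close> by (simp add: n_def)
    have "n + 1 = 2^(2*d) - 1" using \<open>4 \<le> _\<close> by (simp add: n_def)
    then have nx: "pw x (n+1) = x" using xp by simp
    define e where "e = pw x n"
    have per: "\<And>k. pw x (k + (n+1)) = pw x k" using pw_period[OF nx] .
    have ee: "e * e = e"
    proof -
      have "e * e = pw x (n + n + 1)" unfolding e_def by (rule pw_add)
      also have "\<dots> = pw x n" using per[of n] by (simp add: add.assoc)
      finally show ?thesis using e_def by simp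
    qed
    define H where "H = {y. e * y = y \<and> y * e = y \<and> (\<exists>z. e * z = z \<and> z * e = z \<and> y * z = e \<and> z * y = e)}"
    have eH: "e \<in> H" unfolding H_def using ee by blast
    have Hsub: "is_subgroup H"
      unfolding is_subgroup_def
    proof (rule conjI; (intro ballI)?)
      fix a b assume a: "a \<in> H" and b: "b \<in> H"
      then obtain za zb where za: "e * za = za" "za * e = za" "a * za = e" "za * a = e"
        and zb: "e * zb = zb" "zb * e = zb" "b * zb = e" "zb * b = e" unfolding H_def by blast
      have ae: "a * e = a" and eb: "e * b = b" using a b unfolding H_def by auto
      have "a * b * (zb * za) = a * ((b * zb) * za)" by (simp add: mult.assoc)
      also have "\<dots> = e" using zb(3) za(1) za(3) by simp
      finally have 1: "a * b * (zb * za) = e" .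
      have "zb * za * (a * b) = zb * ((za * a) * b)" by (simp add: mult.assoc)
      also have "\<dots> = e" using za(4) eb zb(4) by simp
      finally have 2: "zb * za * (a * b) = e" .
      note 1 2
      moreover have "e * (a * b) = a * b" "a * b * e = a * b"
      proof -
        have ea: "e * a = a" and be: "b * e = b" using a b unfolding H_def by auto
        show "e * (a * b) = a * b" using ea by (simp add: mult.assoc[symmetric])
        show "a * b * e = a * b" using be by (simp add: mult.assoc)
      qed
      moreover have "e * (zb * za) = zb * za" "zb * za * e = zb * za"
      proof -
        show "e * (zb * za) = zb * za" using zb(1) by (simp add: mult.assoc[symmetric])
        show "zb * za * e = zb * za" using za(2) by (simp add: mult.assoc)
      qed
      ultimately show "a * b \<in> H" unfolding H_def by blast
    next
      show "\<exists>e'\<in>H. \<forall>a\<in>H. e' * a = a \<and> a * e' = a \<and> (\<exists>y\<in>H. a * y = e' \<and> y * a = e')"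
      proof (rule bexI[OF _ eH], rule ballI)
        fix a assume a: "a \<in> H"
        then obtain z where z: "e * z = z" "z * e = z" "a * z = e" "z * a = e" unfolding H_def by blast
        have ea: "e * a = a" and ae: "a * e = a" using a unfolding H_def by auto
        have "z \<in> H" unfolding H_def using z ea ae by blast
        then show "e * a = a \<and> a * e = a \<and> (\<exists>y\<in>H. a * y = e \<and> y * a = e)"
          using a z unfolding H_def by blast
      qed
    qed
    have xH: "x \<in> H"
    proof -
      define z where "z = pw x (n - 1)"
      have ex: "e * x = x" unfolding e_def using pw_add[of x n 0] nx by simp
      have xe: "x * e = x" using ex pw_comm[of x n 0] unfolding e_def by simp
      have xz: "x * z = e" unfolding z_def e_def using pw_add[of x 0 "n-1"] n1 by simp
      have zx: "z * x = e" using xz pw_comm[of x 0 "n-1"] unfolding z_def by simp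
      have ez: "e * z = z"
      proof -
        have "e * z = pw x (n + (n - 1) + 1)" unfolding e_def z_def by (rule pw_add)
        also have "n + (n - 1) + 1 = (n - 1) + (n + 1)" using n1 by simp
        finally show ?thesis using per z_def by simp
      qed
      have ze: "z * e = z" using ez pw_comm[of x n "n-1"] unfolding e_def z_def by simp
      show ?thesis unfolding H_def using ex xe xz zx ez ze by blast
    qed
    have maxH: "maximal_subgroup H"
      unfolding maximal_subgroup_def
    proof (intro conjI allI impI)
      show "is_subgroup H" by (rule Hsub)
      fix K assume K: "is_subgroup K \<and> H \<subseteq> K"
      then obtain f where fK: "f \<in> K" and fax: "\<forall>y\<in>K. f * y = y \<and> y * f = y \<and> (\<exists>z\<in>K. y * z = f \<and> z * y = f)"
        unfolding is_subgroup_def by blast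
      have eK: "e \<in> K" using K eH by blast
      obtain w where w: "w \<in> K" "w * e = f" using fax eK by blast
      have "f = w * (e * e)" using w ee by simp
      also have "\<dots> = f * e" using w by (simp add: mult.assoc[symmetric])
      also have "\<dots> = e" using fax eK by blast
      finally have fe: "f = e" .
      have "K \<subseteq> H"
      proof
        fix y assume y: "y \<in> K"
        then obtain z where z: "z \<in> K" "y * z = e" "z * y = e" using fax fe by blast
        have "f * y = y" "y * f = y" "f * z = z" "z * f = z" using fax y z(1) by auto
        then show "y \<in> H" unfolding H_def using fe z by blast
      qed
      then show "K = H" using K by blast
    qed
    have finH: "finite H" by simp
    have oddH: "odd (card H)"
    proof
      assume ev: "even (card H)"
      have cl: "\<forall>a\<in>H. \<forall>b\<in>H. a * b \<in> H" using Hsub unfolding is_subgroup_def by blast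
      have ax: "\<forall>a\<in>H. e * a = a \<and> a * e = a \<and> (\<exists>b\<in>H. a * b = e \<and> b * a = e)"
      proof
        fix a assume a: "a \<in> H"
        then obtain z where z: "e * z = z" "z * e = z" "a * z = e" "z * a = e" unfolding H_def by blast
        have ea: "e * a = a" and ae: "a * e = a" using a unfolding H_def by auto
        have "z \<in> H" unfolding H_def using z ea ae by blast
        then show "e * a = a \<and> a * e = a \<and> (\<exists>b\<in>H. a * b = e \<and> b * a = e)"
          using a z unfolding H_def by blast
      qed
      have gr: "group (grp_of H e)" by (rule grp_of_group[OF cl eH ax])
      have "\<exists>t\<in>carrier (grp_of H e). t \<noteq> \<one>\<^bsub>grp_of H e\<^esub> \<and> t \<otimes>\<^bsub>grp_of H e\<^esub> t = \<one>\<^bsub>grp_of H e\<^esub>"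
        by (rule involution_exists[OF gr]) (use ev in \<open>auto simp: grp_of_def order_def\<close>)
      then obtain t where "t \<noteq> e" "t * t = e" by (auto simp: grp_of_def)
      then have "sq t = sq e" using ee unfolding sq_def by simp
      then show False using inj \<open>t \<noteq> e\<close> unfolding inj_def by blast
    qed
    show "\<exists>G. maximal_subgroup G \<and> x \<in> G \<and> odd (card G)" using maxH xH oddH by blast
  qed
qed

end
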